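(* Let $T = \prod_{n\in\omega} T_n \subseteq \omega^\omega$ where each $T_n \subseteq \omega$ has $|T_n| \leq n+1$. Then there exists a strictly increasing $g \in \omega^\omega$ such that for every strictly increasing $f \in T$: $f(n) < g(n)$ for all $n\in\omega$, and for all $m,n\in\omega$, whenever $g(n) \geq f(m)$ we have $g(n+1) > f(m+2)$. *)

theory Defs
  imports Main
begin

end

theory Submission
  imports Defs
begin

definition SS :: "(nat \<Rightarrow> nat set) \<Rightarrow> nat \<Rightarrow> nat" where
  "SS T k = Max (insert 0 (\<Union>j\<in>{..k}. T j))"

lemma SS_ge:
  assumes "\<And>n. finite (T n)" "j \<le> k" "x \<in> T j"
  shows "x \<le> SS T k"
  unfolding SS_def
  by (rule Max_ge) (use assms in auto)

primrec gg :: "(nat \<Rightarrow> nat set) \<Rightarrow> nat \<Rightarrow> nat" where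
  "gg T 0 = SS T 0 + 1"
| "gg T (Suc n) = max (gg T n) (max (SS T (gg T n + 2)) (SS T (Suc n))) + 1"

lemma gg_step: "gg T n < gg T (Suc n)"
  unfolding gg.simps(2) by (rule le_less_trans[OF max.cobounded1 less_add_one])

lemma gg_S2: "SS T (gg T n + 2) < gg T (Suc n)"
proof -
  have "SS T (gg T n + 2) \<le> max (gg T n) (max (SS T (gg T n + 2)) (SS T (Suc n)))"
    by (rule max.coboundedI2, rule max.cobounded1)
  then show ?thesis unfolding gg.simps(2) by (rule le_less_trans[OF _ less_add_one])
qed

lemma gg_S: "SS T n < gg T n"
proof (cases n)
  case 0
  show ?thesis unfolding 0 gg.simps(1) by (rule less_add_one)
next
  case (Suc k)
  have "SS T (Suc k) \<le> max (gg T k) (max (SS T (gg T k + 2)) (SS T (Suc k)))"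
    by (rule max.coboundedI2, rule max.cobounded2)
  then show ?thesis unfolding Suc gg.simps(2) by (rule le_less_trans[OF _ less_add_one])
qed

theorem lemma3p6:
  fixes T :: "nat \<Rightarrow> nat set"
  assumes "\<And>n. finite (T n)" and "\<And>n. card (T n) \<le> n + 1"
  shows "\<exists>g :: nat \<Rightarrow> nat. strict_mono g \<and>
           (\<forall>f :: nat \<Rightarrow> nat. strict_mono f \<and> (\<forall>n. f n \<in> T n) \<longrightarrow>
              (\<forall>n. f n < g n) \<and>
              (\<forall>m n. g n \<ge> f m \<longrightarrow> g (Suc n) > f (m + 2)))"
proof (intro exI conjI allI impI)
  show "strict_mono (gg T)"
    unfolding strict_mono_Suc_iff using gg_step by (rule allI)
  fix f :: "nat \<Rightarrow> nat" and n m :: nat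
  assume f: "strict_mono f \<and> (\<forall>n. f n \<in> T n)"
  have "f n \<le> SS T n" using f by (intro SS_ge[OF assms(1) order_refl]) simp
  then show "f n < gg T n" using gg_S[of T n] by (rule le_less_trans)
next
  fix f :: "nat \<Rightarrow> nat" and n m :: nat
  assume f: "strict_mono f \<and> (\<forall>n. f n \<in> T n)"
  assume h: "f m \<le> gg T n"
  have "m \<le> f m" using f by (intro strict_mono_imp_increasing) simp
  then have "m + 2 \<le> gg T n + 2" using h by (intro add_right_mono, rule order_trans)
  then have "f (m+2) \<le> SS T (gg T n + 2)" using f by (intro SS_ge[OF assms(1), of "m+2"]) simp_all
  then show "f (m + 2) < gg T (Suc n)" using gg_S2 by (rule le_less_trans)
qed

end
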